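(* Let $(\mathcal H,\mathfrak A_0)$ be a Hilbert quasi *-algebra. A linear functional $\omega$ on $\mathcal H$ belongs to $\mathcal R_c(\mathcal H,\mathfrak A_0)$ if and only if there exists a unique w-positive bounded element $\eta\in\mathcal H$ such that $\omega(\xi)=\langle\xi,\eta\rangle$ for all $\xi\in\mathcal H$.
   Context: A Hilbert algebra is a *-algebra $\mathfrak A_0$ with an inner product $\langle\cdot,\cdot\rangle$ such that (i) for each $x$, $y\mapsto xy$ is continuous for the inner product norm; (ii) $\langle xy,z\rangle=\langle y,x^*z\rangle$ for all $x,y,z$; (iii) $\langle x,y\rangle=\langle y^*,x^*\rangle$ for all $x,y$; (iv) the linear span of $\{xy:x,y\in\mathfrak A_0\}$ is dense in $\mathfrak A_0$. Let $\mathcal H$ be the Hilbert space completion of $\mathfrak A_0$; the involution extends isometrically to $\mathcal H$, and the products $\xi x$, $x\xi$ for $\xi\in\mathcal H$, $x\in\mathfrak A_0$ are defined by continuity. It is assumed that (A): if $\xi\in\mathcal H$ and $\xi x=0$ for all $x\in\mathfrak A_0$ then $\xi=0$. With these operations $(\mathcal H,\mathfrak A_0)$ is a Banach quasi *-algebra (norm from the inner product), called a Hilbert quasi *-algebra. A linear functional $\omega$ on $\mathcal H$ is representable if (L.1) $\omega(x^*x)\ge0$ for all $x\in\mathfrak A_0$; (L.2) $\omega(y^*\xi^*x)=\overline{\omega(x^*\xi y)}$ for all $x,y\in\mathfrak A_0$, $\xi\in\mathcal H$; (L.3) for every $\xi\in\mathcal H$ there is $\gamma_\xi>0$ with $|\omega(\xi^*x)|\le\gamma_\xi\,\omega(x^*x)^{1/2}$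 for all $x\in\mathfrak A_0$. $\mathcal R_c(\mathcal H,\mathfrak A_0)$ is the set of norm-continuous representable functionals. For $\xi\in\mathcal H$, $L_\xi x=\xi x$ ($x\in\mathfrak A_0$); $\xi$ is bounded if $L_\xi$ is bounded on $\mathfrak A_0$ (equivalently $x\mapsto x\xi$ is bounded). $\xi$ is w-positive if $\langle\xi x,x\rangle\ge0$ for all $x\in\mathfrak A_0$. *)

theory Defs
  imports "HOL-Analysis.Analysis" "HOL-Library.Complex_Order"
begin

text \<open>The complex Hilbert space H is modelled as a real Banach space 'a together with a
complex scalar multiplication cs (extending the real one) and a complex inner product ip
(linear in the first, conjugate-linear in the second argument) inducing the norm.\<close>

definition complex_hilbert :: "(complex \<Rightarrow> 'a::{real_normed_vector,complete_space} \<Rightarrow> 'a)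
    \<Rightarrow> ('a \<Rightarrow> 'a \<Rightarrow> complex) \<Rightarrow> bool" where
  "complex_hilbert cs ip \<longleftrightarrow>
     (\<forall>r x. cs (complex_of_real r) x = r *\<^sub>R x) \<and>
     (\<forall>a b x. cs (a * b) x = cs a (cs b x)) \<and>
     (\<forall>a b x. cs (a + b) x = cs a x + cs b x) \<and>
     (\<forall>a x y. cs a (x + y) = cs a x + cs a y) \<and>
     (\<forall>x y z. ip (x + y) z = ip x z + ip y z) \<and>
     (\<forall>c x y. ip (cs c x) y = c * ip x y) \<and>
     (\<forall>x y. ip x y = cnj (ip y x)) \<and>
     (\<forall>x. ip x x = complex_of_real ((norm x)\<^sup>2))"

definition complex_linear :: "(complex \<Rightarrow> 'a::real_vector \<Rightarrow> 'a) \<Rightarrow> (complex \<Rightarrow> 'b::real_vector \<Rightarrow> 'b)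
    \<Rightarrow> ('a \<Rightarrow> 'b) \<Rightarrow> bool" where
  "complex_linear csa csb f \<longleftrightarrow> (\<forall>x y. f (x + y) = f x + f y) \<and> (\<forall>c x. f (csa c x) = csb c (f x))"

definition complex_antilinear :: "(complex \<Rightarrow> 'a::real_vector \<Rightarrow> 'a) \<Rightarrow> ('a \<Rightarrow> 'a) \<Rightarrow> bool" where
  "complex_antilinear cs f \<longleftrightarrow> (\<forall>x y. f (x + y) = f x + f y) \<and> (\<forall>c x. f (cs c x) = cs (cnj c) (f x))"

definition cspan :: "(complex \<Rightarrow> 'a::real_vector \<Rightarrow> 'a) \<Rightarrow> 'a set \<Rightarrow> 'a set" where
  "cspan cs S = {\<Sum>v\<in>F. cs (c v) v | F c. finite F \<and> F \<subseteq> S}"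

definition complex_subspace :: "(complex \<Rightarrow> 'a::real_vector \<Rightarrow> 'a) \<Rightarrow> 'a set \<Rightarrow> bool" where
  "complex_subspace cs S \<longleftrightarrow> 0 \<in> S \<and> (\<forall>x\<in>S. \<forall>y\<in>S. x + y \<in> S) \<and> (\<forall>c. \<forall>x\<in>S. cs c x \<in> S)"

text \<open>Hilbert quasi *-algebra (H, A0): H is a complex Hilbert space, A0 a dense subspace which
is a Hilbert algebra (axioms (i)-(iv)) with respect to mul and star; mul \<xi> x and mul x \<xi>
(\<xi> in H, x in A0) are the extensions by continuity, star is the isometric extension of the
involution, and condition (A) holds.\<close>
definition hilbert_quasi_star_algebra ::
  "(complex \<Rightarrow> 'a::{real_normed_vector,complete_space} \<Rightarrow> 'a) \<Rightarrow> ('a \<Rightarrow> 'a \<Rightarrow> complex)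
   \<Rightarrow> 'a set \<Rightarrow> ('a \<Rightarrow> 'a \<Rightarrow> 'a) \<Rightarrow> ('a \<Rightarrow> 'a) \<Rightarrow> bool" where
  "hilbert_quasi_star_algebra cs ip A0 mul star \<longleftrightarrow>
     complex_hilbert cs ip \<and>
     complex_subspace cs A0 \<and> closure A0 = UNIV \<and>
     \<comment> \<open>*-algebra structure on A0\<close>
     (\<forall>x\<in>A0. \<forall>y\<in>A0. mul x y \<in> A0) \<and>
     (\<forall>x\<in>A0. \<forall>y\<in>A0. \<forall>z\<in>A0. mul (mul x y) z = mul x (mul y z)) \<and>
     (\<forall>x\<in>A0. star x \<in> A0) \<and>
     (\<forall>x\<in>A0. \<forall>y\<in>A0. star (mul x y) = mul (star y) (star x)) \<and>
     \<comment> \<open>involution on H: antilinear isometric involution (extension from A0)\<close>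
     complex_antilinear cs star \<and> (\<forall>\<xi>. star (star \<xi>) = \<xi>) \<and> (\<forall>\<xi>. norm (star \<xi>) = norm \<xi>) \<and>
     \<comment> \<open>products with one factor in A0: linear and continuous in the H-factor\<close>
     (\<forall>x\<in>A0. complex_linear cs cs (\<lambda>\<xi>. mul \<xi> x) \<and> continuous_on UNIV (\<lambda>\<xi>. mul \<xi> x)) \<and>
     (\<forall>x\<in>A0. complex_linear cs cs (\<lambda>\<xi>. mul x \<xi>) \<and> continuous_on UNIV (\<lambda>\<xi>. mul x \<xi>)) \<and>
     \<comment> \<open>(ii), (iii), (iv)\<close>
     (\<forall>x\<in>A0. \<forall>y\<in>A0. \<forall>z\<in>A0. ip (mul x y) z = ip y (mul (star x) z)) \<and>
     (\<forall>x\<in>A0. \<forall>y\<in>A0. ip x y = ip (star y) (star x)) \<and>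
     A0 \<subseteq> closure (cspan cs {mul x y | x y. x \<in> A0 \<and> y \<in> A0}) \<and>
     \<comment> \<open>(A)\<close>
     (\<forall>\<xi>. (\<forall>x\<in>A0. mul \<xi> x = 0) \<longrightarrow> \<xi> = 0)"

definition representable ::
  "'a set \<Rightarrow> ('a \<Rightarrow> 'a \<Rightarrow> 'a) \<Rightarrow> ('a \<Rightarrow> 'a) \<Rightarrow> ('a \<Rightarrow> complex) \<Rightarrow> bool" where
  "representable A0 mul star \<omega> \<longleftrightarrow>
     (\<forall>x\<in>A0. 0 \<le> \<omega> (mul (star x) x)) \<and>
     (\<forall>x\<in>A0. \<forall>y\<in>A0. \<forall>\<xi>. \<omega> (mul (mul (star y) (star \<xi>)) x) = cnj (\<omega> (mul (mul (star x) \<xi>) y))) \<and>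
     (\<forall>\<xi>. \<exists>\<gamma>>0. \<forall>x\<in>A0. cmod (\<omega> (mul (star \<xi>) x)) \<le> \<gamma> * sqrt (Re (\<omega> (mul (star x) x))))"

definition Rc ::
  "(complex \<Rightarrow> 'a::real_normed_vector \<Rightarrow> 'a) \<Rightarrow> 'a set \<Rightarrow> ('a \<Rightarrow> 'a \<Rightarrow> 'a) \<Rightarrow> ('a \<Rightarrow> 'a) \<Rightarrow> ('a \<Rightarrow> complex) set" where
  "Rc cs A0 mul star = {\<omega>. complex_linear cs (*) \<omega> \<and> representable A0 mul star \<omega> \<and> continuous_on UNIV \<omega>}"

definition bounded_elem :: "'a::real_normed_vector set \<Rightarrow> ('a \<Rightarrow> 'a \<Rightarrow> 'a) \<Rightarrow> 'a \<Rightarrow> bool" where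
  "bounded_elem A0 mul \<xi> \<longleftrightarrow> (\<exists>C. \<forall>x\<in>A0. norm (mul \<xi> x) \<le> C * norm x)"

definition w_positive :: "('a \<Rightarrow> 'a \<Rightarrow> complex) \<Rightarrow> 'a set \<Rightarrow> ('a \<Rightarrow> 'a \<Rightarrow> 'a) \<Rightarrow> 'a \<Rightarrow> bool" where
  "w_positive ip A0 mul \<xi> \<longleftrightarrow> (\<forall>x\<in>A0. 0 \<le> ip (mul \<xi> x) x)"

end

theory Submission
  imports Defs
begin


lemma baire_ubp:
  fixes g :: "'i \<Rightarrow> 'a::{real_normed_vector,complete_space} \<Rightarrow> real"
  assumes cont: "\<And>i. i\<in>I \<Longrightarrow> continuous_on UNIV (g i)"
    and pb: "\<And>\<zeta>. \<exists>\<gamma>. \<forall>i\<in>I. \<bar>g i \<zeta>\<bar> \<le> \<gamma>"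
  shows "\<exists>z r (n::nat). r>0 \<and> (\<forall>\<zeta>\<in>ball z r. \<forall>i\<in>I. \<bar>g i \<zeta>\<bar> \<le> real n)"
proof (rule ccontr)
  assume neg: "\<not> ?thesis"
  define F where "F n = {\<zeta>. \<forall>i\<in>I. \<bar>g i \<zeta>\<bar> \<le> real n}" for n :: nat
  have clF: "closed (F n)" for n
  proof -
    have "F n = (\<Inter>i\<in>I. {\<zeta>. \<bar>g i \<zeta>\<bar> \<le> real n})" by (auto simp: F_def)
    moreover have "closed {\<zeta>. \<bar>g i \<zeta>\<bar> \<le> real n}" if "i \<in> I" for i
      apply (rule closed_Collect_le) 
      using cont[OF that] by (intro continuous_on_rabs) auto
    ultimately show ?thesis by (simp add: closed_INT)
  qed
  have int: "euclidean interior_of (F n) = {}" for n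
  proof (rule ccontr)
    assume "euclidean interior_of (F n) \<noteq> {}"
    then obtain z where z: "z \<in> euclidean interior_of (F n)" by blast
    have "open (euclidean interior_of (F n))" using open_openin openin_interior_of by blast
    then obtain r where r: "r > 0" "ball z r \<subseteq> euclidean interior_of (F n)"
      using openE z by metis
    then have "ball z r \<subseteq> F n" using interior_of_subset[of euclidean "F n"] by (meson order_trans)
    then have "\<forall>\<zeta>\<in>ball z r. \<forall>i\<in>I. \<bar>g i \<zeta>\<bar> \<le> real n" by (auto simp: F_def)
    then have "\<exists>z r (n::nat). r>0 \<and> (\<forall>\<zeta>\<in>ball z r. \<forall>i\<in>I. \<bar>g i \<zeta>\<bar> \<le> real n)" using r(1) by blast
    then show False using neg by blast
  qed
  have "euclidean interior_of (\<Union>(range F)) = {}"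
  proof (rule Baire_category_alt)
    show "completely_metrizable_space (euclidean::'a topology) \<or> locally_compact_space (euclidean::'a topology) \<and> regular_space (euclidean::'a topology)"
      by (rule disjI1, rule completely_metrizable_space_euclidean)
    show "countable (range F)" by simp
    fix T assume "T \<in> range F"
    then obtain n where "T = F n" by blast
    then show "closedin euclidean T \<and> euclidean interior_of T = {}"
      using int[of n] clF[of n] closed_closedin by metis
  qed
  moreover have "UNIV = \<Union>(range F)"
  proof (rule UNIV_eq_I)
    fix \<zeta> :: 'a
    obtain \<gamma> where g: "\<forall>i\<in>I. \<bar>g i \<zeta>\<bar> \<le> \<gamma>" using pb by blast
    moreover obtain n where n: "\<gamma> \<le> real n" using real_arch_simple by blast
    ultimately have "\<zeta> \<in> F n" unfolding F_def using order_trans by blast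
    then show "\<zeta> \<in> \<Union>(range F)" by blast
  qed
  ultimately show False by (metis interior_of_topspace topspace_euclidean UNIV_not_empty)
qed




locale chilb =
  fixes cs :: "complex \<Rightarrow> 'a::{real_normed_vector,complete_space} \<Rightarrow> 'a"
    and ip :: "'a \<Rightarrow> 'a \<Rightarrow> complex"
  assumes CH: "complex_hilbert cs ip"
begin

lemma cs_real: "cs (complex_of_real r) x = r *\<^sub>R x" using CH unfolding complex_hilbert_def by blast
lemma cs_mult: "cs (a * b) x = cs a (cs b x)" using CH unfolding complex_hilbert_def by blast
lemma cs_addl: "cs (a + b) x = cs a x + cs b x" using CH unfolding complex_hilbert_def by blast
lemma cs_add: "cs a (x + y) = cs a x + cs a y" using CH unfolding complex_hilbert_def by blast
lemma ip_add1: "ip (x + y) z = ip x z + ip y z" using CH unfolding complex_hilbert_def by blast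
lemma ip_cs1: "ip (cs c x) y = c * ip x y" using CH unfolding complex_hilbert_def by blast
lemma ip_sym: "ip x y = cnj (ip y x)" using CH unfolding complex_hilbert_def by blast
lemma ip_self: "ip x x = complex_of_real ((norm x)\<^sup>2)" using CH unfolding complex_hilbert_def by blast

lemma cs_one: "cs 1 x = x" using cs_real[of 1 x] by simp
lemma cs_zero: "cs 0 x = 0" using cs_real[of 0 x] by simp
lemma cs_zero2: "cs c 0 = 0" using cs_add[of c 0 0] by simp

lemma ip_add2: "ip x (y + z) = ip x y + ip x z"
  by (metis complex_cnj_add ip_add1 ip_sym)
lemma ip_cs2: "ip x (cs c y) = cnj c * ip x y"
  by (metis complex_cnj_mult ip_cs1 ip_sym)
lemma ip_scaleR1: "ip (r *\<^sub>R x) y = complex_of_real r * ip x y"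
  by (metis cs_real ip_cs1)
lemma ip_scaleR2: "ip x (r *\<^sub>R y) = complex_of_real r * ip x y"
  by (metis cs_real ip_cs2 complex_cnj_complex_of_real)
lemma ip_zero1[simp]: "ip 0 y = 0"
  using ip_scaleR1[of 0 y y] by simp
lemma ip_zero2[simp]: "ip y 0 = 0"
  using ip_scaleR2[of y 0 y] by simp
lemma ip_minus1: "ip (- x) y = - ip x y"
  using ip_scaleR1[of "-1" x y] by simp
lemma ip_minus2: "ip x (- y) = - ip x y"
  using ip_scaleR2[of x "-1" y] by simp
lemma ip_diff1: "ip (x - y) z = ip x z - ip y z"
  using ip_add1[of x "-y" z] ip_minus1[of y z] by simp
lemma ip_diff2: "ip z (x - y) = ip z x - ip z y"
  using ip_add2[of z x "-y"] ip_minus2[of z y] by simp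
lemma Re_ip_self: "Re (ip x x) = (norm x)\<^sup>2" by (simp add: ip_self)
lemma Im_ip_self: "Im (ip x x) = 0" by (simp add: ip_self)

lemma ip_sum2: "finite F \<Longrightarrow> ip x (sum f F) = (\<Sum>v\<in>F. ip x (f v))"
  by (induction F rule: finite_induct) (simp_all add: ip_add2)

lemma norm_add_sq: "(norm (x + y))\<^sup>2 = (norm x)\<^sup>2 + (norm y)\<^sup>2 + 2 * Re (ip x y)"
proof -
  have "ip (x+y) (x+y) = ip x x + ip y y + ip x y + ip y x"
    by (simp add: ip_add1 ip_add2)
  then have "Re (ip (x+y) (x+y)) = Re (ip x x) + Re (ip y y) + Re (ip x y) + Re (ip y x)" by simp
  moreover have "Re (ip y x) = Re (ip x y)" by (subst ip_sym) simp
  ultimately show ?thesis by (simp add: Re_ip_self)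
qed

lemma Re_ip_le: "Re (ip x y) \<le> norm x * norm y"
proof -
  have "norm (x + y) \<le> norm x + norm y" by (rule norm_triangle_ineq)
  then have "(norm (x + y))\<^sup>2 \<le> (norm x + norm y)\<^sup>2"
    by (simp add: power_mono)
  then show ?thesis using norm_add_sq[of x y] by (simp add: power2_sum)
qed

lemma norm_cs_unit: "cmod c = 1 \<Longrightarrow> norm (cs c x) = norm x"
proof -
  assume c: "cmod c = 1"
  have "ip (cs c x) (cs c x) = c * cnj c * ip x x" by (simp add: ip_cs1 ip_cs2 mult.assoc)
  also have "c * cnj c = 1" using c by (simp add: complex_mult_cnj cmod_def)
  finally have "Re (ip (cs c x) (cs c x)) = Re (ip x x)" by simp
  then have "(norm (cs c x))\<^sup>2 = (norm x)\<^sup>2" by (simp add: Re_ip_self)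
  then show ?thesis by (simp add: power2_eq_iff_nonneg)
qed

lemma cauchy_schwarz: "cmod (ip x y) \<le> norm x * norm y"
proof (cases "ip x y = 0")
  case True then show ?thesis by simp
next
  case False
  define c where "c = cnj (ip x y) / complex_of_real (cmod (ip x y))"
  have cm: "cmod c = 1" using False by (simp add: c_def norm_divide)
  have "ip (cs c x) y = c * ip x y" by (simp add: ip_cs1)
  also have "\<dots> = complex_of_real (cmod (ip x y))"
  proof -
    have n: "complex_of_real (cmod (ip x y)) \<noteq> 0" using False by simp
    have "c * ip x y = (ip x y * cnj (ip x y)) / complex_of_real (cmod (ip x y))" by (simp add: c_def mult.commute)
    also have "ip x y * cnj (ip x y) = (complex_of_real (cmod (ip x y)))\<^sup>2" by (metis complex_norm_square of_real_power)
    finally show ?thesis using n by (simp add: power2_eq_square)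
  qed
  finally have "cmod (ip x y) = Re (ip (cs c x) y)" by simp
  also have "\<dots> \<le> norm (cs c x) * norm y" by (rule Re_ip_le)
  finally show ?thesis using norm_cs_unit[OF cm] by simp
qed

lemma bl_ip1: "bounded_linear (\<lambda>x. ip x y)"
proof (rule bounded_linear_intro[where K = "norm y"])
  show "ip (x + z) y = ip x y + ip z y" for x z by (rule ip_add1)
  show "ip (r *\<^sub>R x) y = r *\<^sub>R ip x y" for r x by (simp add: ip_scaleR1 scaleR_conv_of_real)
  show "norm (ip x y) \<le> norm x * norm y" for x by (rule cauchy_schwarz)
qed

lemma bl_ip2: "bounded_linear (\<lambda>y. ip x y)"
proof (rule bounded_linear_intro[where K = "norm x"])
  show "ip x (y + z) = ip x y + ip x z" for y z by (rule ip_add2)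
  show "ip x (r *\<^sub>R y) = r *\<^sub>R ip x y" for r y by (simp add: ip_scaleR2 scaleR_conv_of_real)
  show "norm (ip x y) \<le> norm y * norm x" for y using cauchy_schwarz[of x y] by (simp add: mult.commute)
qed

lemma cont_ip1: "continuous_on S f \<Longrightarrow> continuous_on S (\<lambda>x. ip (f x) y)"
  using bounded_linear.continuous_on[OF bl_ip1] by blast
lemma cont_ip2: "continuous_on S f \<Longrightarrow> continuous_on S (\<lambda>x. ip y (f x))"
  using bounded_linear.continuous_on[OF bl_ip2] by blast

lemma ip_self_eq0: "ip x x = 0 \<Longrightarrow> x = 0"
  by (simp add: ip_self)

lemma ip_ext_eq: "(\<And>\<xi>. ip \<xi> a = ip \<xi> b) \<Longrightarrow> a = b"
proof -
  assume h: "\<And>\<xi>. ip \<xi> a = ip \<xi> b"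
  have "ip (a - b) (a - b) = 0" using h[of "a - b"] by (simp add: ip_diff2)
  then show "a = b" using ip_self_eq0[of "a - b"] by simp
qed

lemma norm_add_cs_sq:
  "(norm (x + cs t y))\<^sup>2 = (norm x)\<^sup>2 + 2 * Re (cnj t * ip x y) + (cmod t)\<^sup>2 * (norm y)\<^sup>2"
proof -
  have "norm (cs t y) ^ 2 = (cmod t)\<^sup>2 * (norm y)\<^sup>2"
  proof -
    have "ip (cs t y) (cs t y) = (t * cnj t) * ip y y" by (simp add: ip_cs1 ip_cs2 mult.assoc)
    then have "Re (ip (cs t y) (cs t y)) = (cmod t)\<^sup>2 * Re (ip y y)"
      by (simp add: complex_mult_cnj cmod_power2)
    then show ?thesis by (simp add: Re_ip_self)
  qed
  moreover have "ip x (cs t y) = cnj t * ip x y" by (rule ip_cs2)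
  ultimately show ?thesis using norm_add_sq[of x "cs t y"] by simp
qed

end




context chilb begin

lemma riesz:
  assumes lin: "complex_linear cs (*) \<omega>" and cont: "continuous_on UNIV \<omega>"
  shows "\<exists>\<eta>. \<forall>\<xi>. \<omega> \<xi> = ip \<xi> \<eta>"
proof (cases "\<forall>\<xi>. \<omega> \<xi> = 0")
  case True then show ?thesis by (intro exI[of _ 0]) simp
next
  case False
  have wadd: "\<omega> (x + y) = \<omega> x + \<omega> y" for x y using lin unfolding complex_linear_def by blast
  have wcs: "\<omega> (cs c x) = c * \<omega> x" for c x using lin unfolding complex_linear_def by blast
  have wsR: "\<omega> (r *\<^sub>R x) = complex_of_real r * \<omega> x" for r x using wcs[of "complex_of_real r" x] cs_real by simp
  have w0: "\<omega> 0 = 0" using wsR[of 0 0] by simp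
  obtain x0 where x0: "\<omega> x0 \<noteq> 0" using False by blast
  define A where "A = {\<xi>. \<omega> \<xi> = 1}"
  have x1A: "cs (1 / \<omega> x0) x0 \<in> A" using x0 by (simp add: A_def wcs)
  define d2 where "d2 = Inf ((\<lambda>x. (norm x)\<^sup>2) ` A)"
  have bdd: "bdd_below ((\<lambda>x. (norm x)\<^sup>2) ` A)" by (rule bdd_belowI[of _ 0]) auto
  have d2le: "d2 \<le> (norm x)\<^sup>2" if "x \<in> A" for x
    unfolding d2_def by (rule cInf_lower) (use that bdd in auto)
  have ex: "\<exists>a\<in>A. (norm a)\<^sup>2 < d2 + inverse (real (Suc k))" for k
  proof -
    have "Inf ((\<lambda>x. (norm x)\<^sup>2) ` A) < d2 + inverse (real (Suc k))" by (simp add: d2_def)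
    then obtain v where "v \<in> (\<lambda>x. (norm x)\<^sup>2) ` A" "v < d2 + inverse (real (Suc k))"
      using cInf_lessD[of "(\<lambda>x. (norm x)\<^sup>2) ` A"] x1A by blast
    then show ?thesis by blast
  qed
  then obtain a where aA: "\<And>k. a k \<in> A" and aless: "\<And>k. (norm (a k))\<^sup>2 < d2 + inverse (real (Suc k))"
    by metis
  have mid: "d2 \<le> (norm ((1/2) *\<^sub>R (x + y)))\<^sup>2" if "x \<in> A" "y \<in> A" for x y
  proof (rule d2le)
    show "(1/2) *\<^sub>R (x + y) \<in> A" using that by (simp add: A_def wsR wadd)
  qed
  have para: "(norm (x - y))\<^sup>2 + (norm (x + y))\<^sup>2 = 2 * (norm x)\<^sup>2 + 2 * (norm y)\<^sup>2" for x y :: 'a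
  proof -
    have "(norm (x + (-y)))\<^sup>2 = (norm x)\<^sup>2 + (norm y)\<^sup>2 + 2 * Re (ip x (-y))" using norm_add_sq[of x "-y"] by simp
    then show ?thesis using norm_add_sq[of x y] by (simp add: ip_minus2)
  qed
  have dist_a: "(norm (a j - a k))\<^sup>2 \<le> 2 * inverse (real (Suc j)) + 2 * inverse (real (Suc k))" for j k
  proof -
    have "(norm ((1/2) *\<^sub>R (a j + a k)))\<^sup>2 = (norm (a j + a k))\<^sup>2 / 4"
      by (simp add: power2_eq_square)
    then have "4 * d2 \<le> (norm (a j + a k))\<^sup>2" using mid[OF aA aA, of j k] by simp
    then show ?thesis using para[of "a j" "a k"] aless[of j] aless[of k] by linarith
  qed
  have "Cauchy a"
  proof (rule metric_CauchyI)
    fix e :: real assume e: "e > 0"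
    obtain M where M: "inverse (real (Suc M)) < e\<^sup>2 / 4" using e reals_Archimedean[of "e\<^sup>2/4"] by auto
    have "dist (a m) (a n) < e" if "m \<ge> M" "n \<ge> M" for m n
    proof -
      have im: "inverse (real (Suc m)) \<le> inverse (real (Suc M))" using that by (simp add: le_imp_inverse_le)
      have in_: "inverse (real (Suc n)) \<le> inverse (real (Suc M))" using that by (simp add: le_imp_inverse_le)
      have "(norm (a m - a n))\<^sup>2 < e\<^sup>2" using dist_a[of m n] im in_ M by linarith
      then have "norm (a m - a n) < e" using e by (simp add: power_less_imp_less_base)
      then show ?thesis by (simp add: dist_norm)
    qed
    then show "\<exists>M. \<forall>m\<ge>M. \<forall>n\<ge>M. dist (a m) (a n) < e" by blast
  qed
  then obtain z where lim: "a \<longlonglongrightarrow> z" using Cauchy_convergent_iff convergent_def by blast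
  have "(\<lambda>k. \<omega> (a k)) \<longlonglongrightarrow> \<omega> z"
    using cont lim continuous_on_tendsto_compose[of UNIV \<omega> a z] by auto
  moreover have "(\<lambda>k. \<omega> (a k)) = (\<lambda>k. 1)" using aA by (simp add: A_def)
  ultimately have wz: "\<omega> z = 1" using LIMSEQ_unique tendsto_const by metis
  have "(\<lambda>k. (norm (a k))\<^sup>2) \<longlonglongrightarrow> (norm z)\<^sup>2" by (intro tendsto_intros lim)
  moreover have "(\<lambda>k. d2 + inverse (real (Suc k))) \<longlonglongrightarrow> d2 + 0"
    by (intro tendsto_intros LIMSEQ_inverse_real_of_nat)
  ultimately have zle: "(norm z)\<^sup>2 \<le> d2"
    using aless by (intro LIMSEQ_le[of "\<lambda>k. (norm (a k))\<^sup>2" _ "\<lambda>k. d2 + inverse (real (Suc k))"]) (auto intro: less_imp_le)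
  have orth: "ip z n = 0" if n: "\<omega> n = 0" for n
  proof (rule ccontr)
    assume nz: "ip z n \<noteq> 0"
    define \<beta> where "\<beta> = (cmod (ip z n))\<^sup>2"
    have bpos: "\<beta> > 0" using nz by (simp add: \<beta>_def)
    define s where "s = 1 / ((norm n)\<^sup>2 + 1)"
    have "0 \<le> (norm n)\<^sup>2" by simp
    then have np: "0 < (norm n)\<^sup>2 + 1" by linarith
    then have spos: "s > 0" unfolding s_def by simp
    define t where "t = - (complex_of_real s * ip z n)"
    have "z + cs t n \<in> A" using wz n by (simp add: A_def wadd wcs)
    then have "d2 \<le> (norm (z + cs t n))\<^sup>2" by (rule d2le)
    also have "\<dots> = (norm z)\<^sup>2 + 2 * Re (cnj t * ip z n) + (cmod t)\<^sup>2 * (norm n)\<^sup>2"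
      by (rule norm_add_cs_sq)
    also have "Re (cnj t * ip z n) = - s * \<beta>"
    proof -
      have "cnj t * ip z n = - (complex_of_real s * (cnj (ip z n) * ip z n))" by (simp add: t_def mult.assoc)
      also have "cnj (ip z n) * ip z n = complex_of_real \<beta>" unfolding \<beta>_def by (metis complex_norm_square mult.commute)
      finally show ?thesis by simp
    qed
    also have "(cmod t)\<^sup>2 = s\<^sup>2 * \<beta>"
      using spos by (simp add: t_def \<beta>_def norm_mult power_mult_distrib)
    finally have "d2 \<le> (norm z)\<^sup>2 - 2 * s * \<beta> + s\<^sup>2 * \<beta> * (norm n)\<^sup>2" by simp
    with zle have "2 * s * \<beta> \<le> s\<^sup>2 * \<beta> * (norm n)\<^sup>2" by simp
    then have "2 \<le> s * (norm n)\<^sup>2" using spos bpos by (simp add: power2_eq_square)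
    moreover have "s * (norm n)\<^sup>2 < 1" using np by (simp add: s_def)
    ultimately show False by simp
  qed
  have z0: "z \<noteq> 0" using wz w0 by auto
  define \<eta> where "\<eta> = (1 / (norm z)\<^sup>2) *\<^sub>R z"
  show ?thesis
  proof (intro exI allI)
    fix \<xi>
    have "\<omega> (\<xi> - cs (\<omega> \<xi>) z) = 0"
      using wadd[of \<xi> "- cs (\<omega> \<xi>) z"] wsR[of "-1" "cs (\<omega> \<xi>) z"] wcs wz by simp
    then have "ip z (\<xi> - cs (\<omega> \<xi>) z) = 0" by (rule orth)
    then have "ip z \<xi> = cnj (\<omega> \<xi>) * ip z z" by (simp add: ip_diff2 ip_cs2)
    then have "ip \<xi> z = \<omega> \<xi> * complex_of_real ((norm z)\<^sup>2)"
      by (subst ip_sym) (simp add: ip_self)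
    then show "\<omega> \<xi> = ip \<xi> \<eta>" using z0 by (simp add: \<eta>_def ip_scaleR2)
  qed
qed

end



locale hqa =
  fixes cs :: "complex \<Rightarrow> 'a::{real_normed_vector,complete_space} \<Rightarrow> 'a"
    and ip :: "'a \<Rightarrow> 'a \<Rightarrow> complex" and A0 :: "'a set"
    and mul :: "'a \<Rightarrow> 'a \<Rightarrow> 'a" and star :: "'a \<Rightarrow> 'a"
  assumes HQ: "hilbert_quasi_star_algebra cs ip A0 mul star"
begin

lemmas P1 = HQ[unfolded hilbert_quasi_star_algebra_def, THEN conjunct1]
lemmas P2 = HQ[unfolded hilbert_quasi_star_algebra_def, THEN conjunct2, THEN conjunct1]
lemmas P3 = HQ[unfolded hilbert_quasi_star_algebra_def, THEN conjunct2, THEN conjunct2, THEN conjunct1]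
lemmas P4 = HQ[unfolded hilbert_quasi_star_algebra_def, THEN conjunct2, THEN conjunct2, THEN conjunct2, THEN conjunct1]
lemmas P5 = HQ[unfolded hilbert_quasi_star_algebra_def, THEN conjunct2, THEN conjunct2, THEN conjunct2, THEN conjunct2, THEN conjunct1]
lemmas P6 = HQ[unfolded hilbert_quasi_star_algebra_def, THEN conjunct2, THEN conjunct2, THEN conjunct2, THEN conjunct2, THEN conjunct2, THEN conjunct1]
lemmas P7 = HQ[unfolded hilbert_quasi_star_algebra_def, THEN conjunct2, THEN conjunct2, THEN conjunct2, THEN conjunct2, THEN conjunct2, THEN conjunct2, THEN conjunct1]
lemmas P8 = HQ[unfolded hilbert_quasi_star_algebra_def, THEN conjunct2, THEN conjunct2, THEN conjunct2, THEN conjunct2, THEN conjunct2, THEN conjunct2, THEN conjunct2, THEN conjunct1]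
lemmas P9 = HQ[unfolded hilbert_quasi_star_algebra_def, THEN conjunct2, THEN conjunct2, THEN conjunct2, THEN conjunct2, THEN conjunct2, THEN conjunct2, THEN conjunct2, THEN conjunct2, THEN conjunct1]
lemmas P10 = HQ[unfolded hilbert_quasi_star_algebra_def, THEN conjunct2, THEN conjunct2, THEN conjunct2, THEN conjunct2, THEN conjunct2, THEN conjunct2, THEN conjunct2, THEN conjunct2, THEN conjunct2, THEN conjunct1]
lemmas P11 = HQ[unfolded hilbert_quasi_star_algebra_def, THEN conjunct2, THEN conjunct2, THEN conjunct2, THEN conjunct2, THEN conjunct2, THEN conjunct2, THEN conjunct2, THEN conjunct2, THEN conjunct2, THEN conjunct2, THEN conjunct1]
lemmas P12 = HQ[unfolded hilbert_quasi_star_algebra_def, THEN conjunct2, THEN conjunct2, THEN conjunct2, THEN conjunct2, THEN conjunct2, THEN conjunct2, THEN conjunct2, THEN conjunct2, THEN conjunct2, THEN conjunct2, THEN conjunct2, THEN conjunct1]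
lemmas P13 = HQ[unfolded hilbert_quasi_star_algebra_def, THEN conjunct2, THEN conjunct2, THEN conjunct2, THEN conjunct2, THEN conjunct2, THEN conjunct2, THEN conjunct2, THEN conjunct2, THEN conjunct2, THEN conjunct2, THEN conjunct2, THEN conjunct2, THEN conjunct1]
lemmas P14 = HQ[unfolded hilbert_quasi_star_algebra_def, THEN conjunct2, THEN conjunct2, THEN conjunct2, THEN conjunct2, THEN conjunct2, THEN conjunct2, THEN conjunct2, THEN conjunct2, THEN conjunct2, THEN conjunct2, THEN conjunct2, THEN conjunct2, THEN conjunct2, THEN conjunct1]
lemmas P15 = HQ[unfolded hilbert_quasi_star_algebra_def, THEN conjunct2, THEN conjunct2, THEN conjunct2, THEN conjunct2, THEN conjunct2, THEN conjunct2, THEN conjunct2, THEN conjunct2, THEN conjunct2, THEN conjunct2, THEN conjunct2, THEN conjunct2, THEN conjunct2, THEN conjunct2, THEN conjunct1]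
lemmas P16 = HQ[unfolded hilbert_quasi_star_algebra_def, THEN conjunct2, THEN conjunct2, THEN conjunct2, THEN conjunct2, THEN conjunct2, THEN conjunct2, THEN conjunct2, THEN conjunct2, THEN conjunct2, THEN conjunct2, THEN conjunct2, THEN conjunct2, THEN conjunct2, THEN conjunct2, THEN conjunct2]

sublocale chilb cs ip by unfold_locales (rule P1)

lemma A0_0: "0 \<in> A0" using P2 unfolding complex_subspace_def by blast
lemma A0_add: "x \<in> A0 \<Longrightarrow> y \<in> A0 \<Longrightarrow> x + y \<in> A0" using P2 unfolding complex_subspace_def by blast
lemma A0_cs: "x \<in> A0 \<Longrightarrow> cs c x \<in> A0" using P2 unfolding complex_subspace_def by blast
lemma A0_scaleR: "x \<in> A0 \<Longrightarrow> r *\<^sub>R x \<in> A0" using A0_cs[of x "complex_of_real r"] cs_real by simp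
lemma dense: "closure A0 = UNIV" using P3 by blast
lemma mul_mem: "x \<in> A0 \<Longrightarrow> y \<in> A0 \<Longrightarrow> mul x y \<in> A0" using P4 by blast
lemma assoc: "x \<in> A0 \<Longrightarrow> y \<in> A0 \<Longrightarrow> z \<in> A0 \<Longrightarrow> mul (mul x y) z = mul x (mul y z)" using P5 by blast
lemma star_mem: "x \<in> A0 \<Longrightarrow> star x \<in> A0" using P6 by blast
lemma star_mul: "x \<in> A0 \<Longrightarrow> y \<in> A0 \<Longrightarrow> star (mul x y) = mul (star y) (star x)" using P7 by blast
lemma star_add: "star (x + y) = star x + star y" using P8 unfolding complex_antilinear_def by blast
lemma star_cs: "star (cs c x) = cs (cnj c) (star x)" using P8 unfolding complex_antilinear_def by blast
lemma star_star[simp]: "star (star x) = x" using P9 by blast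
lemma norm_star: "norm (star x) = norm x" using P10 by blast
lemma mulR_add: "x \<in> A0 \<Longrightarrow> mul (\<xi> + \<zeta>) x = mul \<xi> x + mul \<zeta> x" using P11 unfolding complex_linear_def by blast
lemma mulR_cs: "x \<in> A0 \<Longrightarrow> mul (cs c \<xi>) x = cs c (mul \<xi> x)" using P11 unfolding complex_linear_def by blast
lemma mulR_cont: "x \<in> A0 \<Longrightarrow> continuous_on UNIV (\<lambda>\<xi>. mul \<xi> x)" using P11 by blast
lemma mulL_add: "x \<in> A0 \<Longrightarrow> mul x (\<xi> + \<zeta>) = mul x \<xi> + mul x \<zeta>" using P12 unfolding complex_linear_def by blast
lemma mulL_cs: "x \<in> A0 \<Longrightarrow> mul x (cs c \<xi>) = cs c (mul x \<xi>)" using P12 unfolding complex_linear_def by blast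
lemma mulL_cont: "x \<in> A0 \<Longrightarrow> continuous_on UNIV (\<lambda>\<xi>. mul x \<xi>)" using P12 by blast
lemma ax_ii: "x \<in> A0 \<Longrightarrow> y \<in> A0 \<Longrightarrow> z \<in> A0 \<Longrightarrow> ip (mul x y) z = ip y (mul (star x) z)" using P13 by blast
lemma ax_iii: "x \<in> A0 \<Longrightarrow> y \<in> A0 \<Longrightarrow> ip x y = ip (star y) (star x)" using P14 by blast
lemma ax_iv: "A0 \<subseteq> closure (cspan cs {mul x y | x y. x \<in> A0 \<and> y \<in> A0})" using P15 by blast

lemma star_scaleR: "star (r *\<^sub>R x) = r *\<^sub>R star x"
  using star_cs[of "complex_of_real r" x] cs_real by simp
lemma bl_star: "bounded_linear star"
  by (rule bounded_linear_intro[where K=1]) (simp_all add: star_add star_scaleR norm_star)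
lemma cont_star: "continuous_on S f \<Longrightarrow> continuous_on S (\<lambda>x. star (f x))"
  using bounded_linear.continuous_on[OF bl_star] by blast

lemma cont_mulR: "c \<in> A0 \<Longrightarrow> continuous_on UNIV f \<Longrightarrow> continuous_on UNIV (\<lambda>x. mul (f x) c)"
  using continuous_on_compose[of UNIV f "\<lambda>\<xi>. mul \<xi> c"] mulR_cont[of c]
  by (auto simp: o_def intro: continuous_on_subset)
lemma cont_mulL: "c \<in> A0 \<Longrightarrow> continuous_on UNIV f \<Longrightarrow> continuous_on UNIV (\<lambda>x. mul c (f x))"
  using continuous_on_compose[of UNIV f "\<lambda>\<xi>. mul c \<xi>"] mulL_cont[of c]
  by (auto simp: o_def intro: continuous_on_subset)

lemma dens_eq:
  fixes f g :: "'a \<Rightarrow> 'b::t2_space"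
  assumes "continuous_on UNIV f" "continuous_on UNIV g" "\<And>x. x \<in> A0 \<Longrightarrow> f x = g x"
  shows "f \<xi> = g \<xi>"
proof -
  have "closed {x. f x = g x}" by (rule closed_Collect_eq[OF assms(1,2)])
  moreover have "A0 \<subseteq> {x. f x = g x}" using assms(3) by blast
  ultimately have "closure A0 \<subseteq> {x. f x = g x}" by (rule closure_minimal[rotated])
  then show ?thesis using dense by auto
qed

lemma cid: "continuous_on UNIV (\<lambda>x::'a. x)" by (rule continuous_on_id)
lemma ccst: "continuous_on UNIV (\<lambda>x::'a. c)" by (rule continuous_on_const)

lemma I3: "a \<in> A0 \<Longrightarrow> b \<in> A0 \<Longrightarrow> c \<in> A0 \<Longrightarrow> ip (mul a (star c)) b = ip a (mul b c)"
proof -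
  assume a: "a \<in> A0" and b: "b \<in> A0" and c: "c \<in> A0"
  have "ip (mul a (star c)) b = ip (star b) (star (mul a (star c)))"
    by (rule ax_iii) (use a b c in \<open>auto intro: mul_mem star_mem\<close>)
  also have "star (mul a (star c)) = mul c (star a)" using a c star_mem by (simp add: star_mul)
  also have "ip (star b) (mul c (star a)) = ip (mul (star c) (star b)) (star a)"
    using ax_ii[of "star c" "star b" "star a"] a b c star_mem by simp
  also have "mul (star c) (star b) = star (mul b c)" using b c by (simp add: star_mul)
  also have "ip (star (mul b c)) (star a) = ip a (mul b c)"
    using ax_iii[of a "mul b c"] a b c mul_mem by simp
  finally show ?thesis .
qed

lemma E1: "b \<in> A0 \<Longrightarrow> c \<in> A0 \<Longrightarrow> ip (mul \<xi> c) b = ip \<xi> (mul b (star c))"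
proof -
  assume b: "b \<in> A0" and c: "c \<in> A0"
  show ?thesis
  proof (rule dens_eq[where f="\<lambda>\<xi>. ip (mul \<xi> c) b" and g="\<lambda>\<xi>. ip \<xi> (mul b (star c))"])
    show "continuous_on UNIV (\<lambda>\<xi>. ip (mul \<xi> c) b)" by (intro cont_ip1 cont_mulR c cid)
    show "continuous_on UNIV (\<lambda>\<xi>. ip \<xi> (mul b (star c)))" by (intro cont_ip1 cid)
    fix a assume a: "a \<in> A0"
    show "ip (mul a c) b = ip a (mul b (star c))"
      using I3[of a b "star c"] a b c star_mem by simp
  qed
qed

lemma E2: "c \<in> A0 \<Longrightarrow> ip (mul \<xi> c) \<zeta> = ip \<xi> (mul \<zeta> (star c))"
proof -
  assume c: "c \<in> A0"
  show ?thesis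
  proof (rule dens_eq[where f="\<lambda>\<zeta>. ip (mul \<xi> c) \<zeta>" and g="\<lambda>\<zeta>. ip \<xi> (mul \<zeta> (star c))"])
    show "continuous_on UNIV (\<lambda>\<zeta>. ip (mul \<xi> c) \<zeta>)" by (intro cont_ip2 cid)
    show "continuous_on UNIV (\<lambda>\<zeta>. ip \<xi> (mul \<zeta> (star c)))" by (intro cont_ip2 cont_mulR star_mem c cid)
    fix b assume b: "b \<in> A0"
    show "ip (mul \<xi> c) b = ip \<xi> (mul b (star c))" by (rule E1[OF b c])
  qed
qed

lemma E3a: "a \<in> A0 \<Longrightarrow> b \<in> A0 \<Longrightarrow> ip (mul a b) \<zeta> = ip b (mul (star a) \<zeta>)"
proof -
  assume a: "a \<in> A0" and b: "b \<in> A0"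
  show ?thesis
  proof (rule dens_eq[where f="\<lambda>\<zeta>. ip (mul a b) \<zeta>" and g="\<lambda>\<zeta>. ip b (mul (star a) \<zeta>)"])
    show "continuous_on UNIV (\<lambda>\<zeta>. ip (mul a b) \<zeta>)" by (intro cont_ip2 cid)
    show "continuous_on UNIV (\<lambda>\<zeta>. ip b (mul (star a) \<zeta>))" by (intro cont_ip2 cont_mulL star_mem a cid)
    fix z assume z: "z \<in> A0"
    show "ip (mul a b) z = ip b (mul (star a) z)" by (rule ax_ii[OF a b z])
  qed
qed

lemma E3: "a \<in> A0 \<Longrightarrow> ip (mul a \<xi>) \<zeta> = ip \<xi> (mul (star a) \<zeta>)"
proof -
  assume a: "a \<in> A0"
  show ?thesis
  proof (rule dens_eq[where f="\<lambda>\<xi>. ip (mul a \<xi>) \<zeta>" and g="\<lambda>\<xi>. ip \<xi> (mul (star a) \<zeta>)"])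
    show "continuous_on UNIV (\<lambda>\<xi>. ip (mul a \<xi>) \<zeta>)" by (intro cont_ip1 cont_mulL a cid)
    show "continuous_on UNIV (\<lambda>\<xi>. ip \<xi> (mul (star a) \<zeta>))" by (intro cont_ip1 cid)
    fix b assume b: "b \<in> A0"
    show "ip (mul a b) \<zeta> = ip b (mul (star a) \<zeta>)" by (rule E3a[OF a b])
  qed
qed

lemma E4a: "b \<in> A0 \<Longrightarrow> ip \<xi> b = ip (star b) (star \<xi>)"
proof -
  assume b: "b \<in> A0"
  show ?thesis
  proof (rule dens_eq[where f="\<lambda>\<xi>. ip \<xi> b" and g="\<lambda>\<xi>. ip (star b) (star \<xi>)"])
    show "continuous_on UNIV (\<lambda>\<xi>. ip \<xi> b)" by (intro cont_ip1 cid)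
    show "continuous_on UNIV (\<lambda>\<xi>. ip (star b) (star \<xi>))" by (intro cont_ip2 cont_star cid)
    fix a assume a: "a \<in> A0"
    show "ip a b = ip (star b) (star a)" by (rule ax_iii[OF a b])
  qed
qed

lemma E4: "ip \<xi> \<zeta> = ip (star \<zeta>) (star \<xi>)"
proof (rule dens_eq[where f="\<lambda>\<zeta>. ip \<xi> \<zeta>" and g="\<lambda>\<zeta>. ip (star \<zeta>) (star \<xi>)"])
  show "continuous_on UNIV (\<lambda>\<zeta>. ip \<xi> \<zeta>)" by (intro cont_ip2 cid)
  show "continuous_on UNIV (\<lambda>\<zeta>. ip (star \<zeta>) (star \<xi>))" by (intro cont_ip1 cont_star cid)
  fix b assume b: "b \<in> A0"
  show "ip \<xi> b = ip (star b) (star \<xi>)" by (rule E4a[OF b])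
qed

lemma E5a: "a \<in> A0 \<Longrightarrow> star (mul a \<xi>) = mul (star \<xi>) (star a)"
proof -
  assume a: "a \<in> A0"
  show ?thesis
  proof (rule dens_eq[where f="\<lambda>\<xi>. star (mul a \<xi>)" and g="\<lambda>\<xi>. mul (star \<xi>) (star a)"])
    show "continuous_on UNIV (\<lambda>\<xi>. star (mul a \<xi>))" by (intro cont_star cont_mulL a cid)
    show "continuous_on UNIV (\<lambda>\<xi>. mul (star \<xi>) (star a))" by (intro cont_mulR star_mem a cont_star cid)
    fix b assume b: "b \<in> A0"
    show "star (mul a b) = mul (star b) (star a)" by (rule star_mul[OF a b])
  qed
qed

lemma E5b: "a \<in> A0 \<Longrightarrow> star (mul \<xi> a) = mul (star a) (star \<xi>)"
proof -
  assume a: "a \<in> A0"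
  show ?thesis
  proof (rule dens_eq[where f="\<lambda>\<xi>. star (mul \<xi> a)" and g="\<lambda>\<xi>. mul (star a) (star \<xi>)"])
    show "continuous_on UNIV (\<lambda>\<xi>. star (mul \<xi> a))" by (intro cont_star cont_mulR a cid)
    show "continuous_on UNIV (\<lambda>\<xi>. mul (star a) (star \<xi>))" by (intro cont_mulL star_mem a cont_star cid)
    fix b assume b: "b \<in> A0"
    show "star (mul b a) = mul (star a) (star b)" by (rule star_mul[OF b a])
  qed
qed

lemma E6: "a \<in> A0 \<Longrightarrow> b \<in> A0 \<Longrightarrow> mul (mul a \<xi>) b = mul a (mul \<xi> b)"
proof -
  assume a: "a \<in> A0" and b: "b \<in> A0"
  show ?thesis
  proof (rule dens_eq[where f="\<lambda>\<xi>. mul (mul a \<xi>) b" and g="\<lambda>\<xi>. mul a (mul \<xi> b)"])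
    show "continuous_on UNIV (\<lambda>\<xi>. mul (mul a \<xi>) b)" by (intro cont_mulR cont_mulL a b cid)
    show "continuous_on UNIV (\<lambda>\<xi>. mul a (mul \<xi> b))" by (intro cont_mulR cont_mulL a b cid)
    fix c assume c: "c \<in> A0"
    show "mul (mul a c) b = mul a (mul c b)" by (rule assoc[OF a c b])
  qed
qed

lemma M1add: "u \<in> A0 \<Longrightarrow> v \<in> A0 \<Longrightarrow> mul \<xi> (u + v) = mul \<xi> u + mul \<xi> v"
proof -
  assume u: "u \<in> A0" and v: "v \<in> A0"
  show ?thesis
  proof (rule dens_eq[where f="\<lambda>\<xi>. mul \<xi> (u + v)" and g="\<lambda>\<xi>. mul \<xi> u + mul \<xi> v"])
    show "continuous_on UNIV (\<lambda>\<xi>. mul \<xi> (u + v))" by (intro cont_mulR A0_add u v cid)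
    show "continuous_on UNIV (\<lambda>\<xi>. mul \<xi> u + mul \<xi> v)" by (intro continuous_on_add cont_mulR u v cid)
    fix a assume a: "a \<in> A0"
    show "mul a (u + v) = mul a u + mul a v" by (rule mulL_add[OF a])
  qed
qed

lemma M1cs: "u \<in> A0 \<Longrightarrow> mul \<xi> (cs c u) = cs c (mul \<xi> u)"
proof -
  assume u: "u \<in> A0"
  have ccs: "continuous_on UNIV (\<lambda>x. cs c x)"
  proof -
    have "bounded_linear (\<lambda>x. cs c x)"
    proof (rule bounded_linear_intro[where K = "cmod c"])
      show "cs c (x + y) = cs c x + cs c y" for x y by (rule cs_add)
      show "cs c (r *\<^sub>R x) = r *\<^sub>R cs c x" for r x
        by (metis cs_mult cs_real mult.commute)
      show "norm (cs c x) \<le> norm x * cmod c" for x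
      proof (cases "c = 0")
        case True then show ?thesis by (simp add: cs_zero)
      next
        case False
        have "cs c x = cs (complex_of_real (cmod c)) (cs (c / complex_of_real (cmod c)) x)"
          using False by (simp add: cs_mult[symmetric])
        also have "\<dots> = cmod c *\<^sub>R cs (c / complex_of_real (cmod c)) x" by (rule cs_real)
        finally have "norm (cs c x) = cmod c * norm (cs (c / complex_of_real (cmod c)) x)" by simp
        also have "norm (cs (c / complex_of_real (cmod c)) x) = norm x"
          using False by (intro norm_cs_unit) (simp add: norm_divide)
        finally show ?thesis by (simp add: mult.commute)
      qed
    qed
    then show ?thesis by (rule linear_continuous_on)
  qed
  show ?thesis
  proof (rule dens_eq[where f="\<lambda>\<xi>. mul \<xi> (cs c u)" and g="\<lambda>\<xi>. cs c (mul \<xi> u)"])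
    show "continuous_on UNIV (\<lambda>\<xi>. mul \<xi> (cs c u))" by (intro cont_mulR A0_cs u cid)
    show "continuous_on UNIV (\<lambda>\<xi>. cs c (mul \<xi> u))"
      using continuous_on_compose[of UNIV "\<lambda>\<xi>. mul \<xi> u" "cs c"] cont_mulR[OF u cid] ccs
      by (auto simp: o_def intro: continuous_on_subset)
    fix a assume a: "a \<in> A0"
    show "mul a (cs c u) = cs c (mul a u)" by (rule mulL_cs[OF a])
  qed
qed

lemma M1sR: "u \<in> A0 \<Longrightarrow> mul \<xi> (r *\<^sub>R u) = r *\<^sub>R (mul \<xi> u)"
  using M1cs[of u \<xi> "complex_of_real r"] cs_real by simp

lemma M1zero: "mul \<xi> 0 = 0"
  using M1sR[OF A0_0, of \<xi> 0] by simp

end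



context hqa begin

lemma wpos_Im: "w_positive ip A0 mul \<eta> \<Longrightarrow> u \<in> A0 \<Longrightarrow> Im (ip (mul \<eta> u) u) = 0"
  unfolding w_positive_def less_eq_complex_def by simp
lemma wpos_Re: "w_positive ip A0 mul \<eta> \<Longrightarrow> u \<in> A0 \<Longrightarrow> 0 \<le> Re (ip (mul \<eta> u) u)"
  unfolding w_positive_def less_eq_complex_def by simp

lemma Bexp: "u \<in> A0 \<Longrightarrow> v \<in> A0 \<Longrightarrow>
  ip (mul \<eta> (u + cs l v)) (u + cs l v) =
   ip (mul \<eta> u) u + cnj l * ip (mul \<eta> u) v + l * ip (mul \<eta> v) u + l * cnj l * ip (mul \<eta> v) v"
proof -
  assume u: "u \<in> A0" and v: "v \<in> A0"
  have "mul \<eta> (u + cs l v) = mul \<eta> u + cs l (mul \<eta> v)"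
    using M1add[OF u A0_cs[OF v]] M1cs[OF v] by simp
  then show ?thesis by (simp add: ip_add1 ip_add2 ip_cs1 ip_cs2 algebra_simps)
qed

lemma herm:
  assumes wp: "w_positive ip A0 mul \<eta>" and u: "u \<in> A0" and v: "v \<in> A0"
  shows "ip (mul \<eta> u) v = cnj (ip (mul \<eta> v) u)"
proof -
  define a where "a = ip (mul \<eta> u) v"
  define b where "b = ip (mul \<eta> v) u"
  have uv1: "u + cs 1 v \<in> A0" "u + cs \<i> v \<in> A0" using u v by (auto intro: A0_add A0_cs)
  have i1: "Im (ip (mul \<eta> (u + cs 1 v)) (u + cs 1 v)) = 0" by (rule wpos_Im[OF wp uv1(1)])
  have i2: "Im (ip (mul \<eta> (u + cs \<i> v)) (u + cs \<i> v)) = 0" by (rule wpos_Im[OF wp uv1(2)])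
  have iu: "Im (ip (mul \<eta> u) u) = 0" by (rule wpos_Im[OF wp u])
  have iv: "Im (ip (mul \<eta> v) v) = 0" by (rule wpos_Im[OF wp v])
  have "Im (a + b) = 0" using i1 iu iv unfolding Bexp[OF u v] a_def b_def by simp
  moreover have "Re b - Re a = 0" using i2 iu iv unfolding Bexp[OF u v] a_def b_def by simp
  ultimately show ?thesis unfolding a_def[symmetric] b_def[symmetric] by (simp add: complex_eq_iff)
qed

lemma selfadj:
  assumes wp: "w_positive ip A0 mul \<eta>"
  shows "star \<eta> = \<eta>"
proof -
  define d where "d = \<eta> - star \<eta>"
  have key: "ip d (mul v w) = 0" if v: "v \<in> A0" and w: "w \<in> A0" for v w
  proof -
    have u: "star w \<in> A0" using w by (rule star_mem)
    have "ip (mul \<eta> (star w)) v = cnj (ip (mul \<eta> v) (star w))" by (rule herm[OF wp u v])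
    also have "\<dots> = ip (star w) (mul \<eta> v)" by (subst ip_sym) simp
    also have "\<dots> = ip (star (mul \<eta> v)) w" by (subst E4) simp
    also have "star (mul \<eta> v) = mul (star v) (star \<eta>)" by (rule E5b[OF v])
    also have "ip (mul (star v) (star \<eta>)) w = ip (star \<eta>) (mul v w)"
      using E3[OF star_mem[OF v], of "star \<eta>" w] by simp
    finally have "ip (mul \<eta> (star w)) v = ip (star \<eta>) (mul v w)" .
    moreover have "ip (mul \<eta> (star w)) v = ip \<eta> (mul v w)" using E1[OF v u, of \<eta>] by simp
    ultimately show ?thesis by (simp add: d_def ip_diff1)
  qed
  define Z where "Z = {p. ip d p = 0}"
  have span: "cspan cs {mul x y | x y. x \<in> A0 \<and> y \<in> A0} \<subseteq> Z"
  proof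
    fix p assume "p \<in> cspan cs {mul x y | x y. x \<in> A0 \<and> y \<in> A0}"
    then obtain F c where F: "finite F" "F \<subseteq> {mul x y | x y. x \<in> A0 \<and> y \<in> A0}" and p: "p = (\<Sum>v\<in>F. cs (c v) v)"
      unfolding cspan_def by blast
    have "ip d p = (\<Sum>v\<in>F. cnj (c v) * ip d v)" unfolding p by (simp add: ip_sum2[OF F(1)] ip_cs2)
    also have "\<dots> = 0"
    proof (rule sum.neutral, rule ballI)
      fix v assume "v \<in> F"
      with F(2) obtain x y where "v = mul x y" "x \<in> A0" "y \<in> A0" by blast
      then show "cnj (c v) * ip d v = 0" using key by simp
    qed
    finally show "p \<in> Z" by (simp add: Z_def)
  qed
  have "closed Z" unfolding Z_def by (rule closed_Collect_eq) (intro cont_ip2 cid, rule ccst)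
  then have "closure (cspan cs {mul x y | x y. x \<in> A0 \<and> y \<in> A0}) \<subseteq> Z" using span by (rule closure_minimal[rotated])
  then have A0Z: "A0 \<subseteq> Z" using ax_iv by blast
  have "ip d d = (\<lambda>_. 0) d"
    by (rule dens_eq[where f="\<lambda>p. ip d p"]) (intro cont_ip2 cid, rule ccst, use A0Z Z_def in blast)
  then have "d = 0" using ip_self_eq0 by simp
  then show ?thesis by (simp add: d_def)
qed

lemma CSB:
  assumes wp: "w_positive ip A0 mul \<eta>" and u: "u \<in> A0" and v: "v \<in> A0"
  shows "(cmod (ip (mul \<eta> u) v))\<^sup>2 \<le> Re (ip (mul \<eta> u) u) * Re (ip (mul \<eta> v) v)"
proof -
  define b where "b = ip (mul \<eta> u) v"
  define P where "P = Re (ip (mul \<eta> u) u)"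
  define Q where "Q = Re (ip (mul \<eta> v) v)"
  define \<beta> where "\<beta> = (cmod b)\<^sup>2"
  have P0: "P \<ge> 0" unfolding P_def by (rule wpos_Re[OF wp u])
  have Q0: "Q \<ge> 0" unfolding Q_def by (rule wpos_Re[OF wp v])
  have hP: "ip (mul \<eta> u) u = complex_of_real P" using wpos_Im[OF wp u] by (simp add: P_def complex_eq_iff)
  have hQ: "ip (mul \<eta> v) v = complex_of_real Q" using wpos_Im[OF wp v] by (simp add: Q_def complex_eq_iff)
  have hba: "ip (mul \<eta> v) u = cnj b" using herm[OF wp v u] by (simp add: b_def)
  have bb: "cnj b * b = complex_of_real \<beta>" unfolding \<beta>_def by (metis complex_norm_square mult.commute)
  have ineq: "0 \<le> P - 2 * t * \<beta> + t\<^sup>2 * \<beta> * Q" for t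
  proof -
    define l where "l = - (complex_of_real t * b)"
    have w: "u + cs l v \<in> A0" using u v by (auto intro: A0_add A0_cs)
    have h1: "cnj l * b = - complex_of_real (t * \<beta>)" using bb by (simp add: l_def mult.assoc)
    have bb2: "b * cnj b = complex_of_real \<beta>" by (metis bb mult.commute)
    have h2: "l * cnj b = - complex_of_real (t * \<beta>)" using bb2 by (simp add: l_def mult.assoc)
    have h3: "l * cnj l = complex_of_real (t\<^sup>2 * \<beta>)"
    proof -
      have "l * cnj l = complex_of_real (t * t) * (b * cnj b)" by (simp add: l_def mult_ac)
      then show ?thesis using bb2 by (simp add: power2_eq_square)
    qed
    have "ip (mul \<eta> (u + cs l v)) (u + cs l v) = complex_of_real (P - 2 * t * \<beta> + t\<^sup>2 * \<beta> * Q)"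
      unfolding Bexp[OF u v] b_def[symmetric] hba hP hQ h2 h3 h1 by simp
    moreover have "0 \<le> Re (ip (mul \<eta> (u + cs l v)) (u + cs l v))" by (rule wpos_Re[OF wp w])
    ultimately show ?thesis by simp
  qed
  have "\<beta> \<le> P * Q"
  proof (cases "Q > 0")
    case True
    have "0 \<le> P - 2 * (1/Q) * \<beta> + (1/Q)\<^sup>2 * \<beta> * Q" by (rule ineq)
    also have "\<dots> = P - \<beta> / Q" using True by (simp add: power2_eq_square field_simps)
    finally show ?thesis using True by (simp add: field_simps)
  next
    case False
    then have Q: "Q = 0" using Q0 by simp
    show ?thesis
    proof (rule ccontr)
      assume "\<not> \<beta> \<le> P * Q"
      then have bp: "\<beta> > 0" using Q by simp
      have "0 \<le> P - 2 * ((P + 1) / (2 * \<beta>)) * \<beta> + ((P + 1) / (2 * \<beta>))\<^sup>2 * \<beta> * Q" by (rule ineq)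
      also have "\<dots> = -1" using Q bp by (simp add: field_simps)
      finally show False by simp
    qed
  qed
  then show ?thesis by (simp add: \<beta>_def P_def Q_def b_def)
qed

lemma dens_le:
  fixes f g :: "'a \<Rightarrow> real"
  assumes "continuous_on UNIV f" "continuous_on UNIV g" "\<And>x. x \<in> A0 \<Longrightarrow> f x \<le> g x"
  shows "f \<xi> \<le> g \<xi>"
proof -
  have "closed {x. f x \<le> g x}" by (rule closed_Collect_le[OF assms(1,2)])
  moreover have "A0 \<subseteq> {x. f x \<le> g x}" using assms(3) by blast
  ultimately have "closure A0 \<subseteq> {x. f x \<le> g x}" by (rule closure_minimal[rotated])
  then show ?thesis using dense by auto
qed

lemma Kbound:
  assumes wp: "w_positive ip A0 mul \<eta>" and bd: "\<And>x. x \<in> A0 \<Longrightarrow> norm (mul \<eta> x) \<le> C * norm x"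
    and u: "u \<in> A0"
  shows "(norm (mul \<eta> u))\<^sup>2 \<le> \<bar>C\<bar> * Re (ip (mul \<eta> u) u)"
proof -
  define w where "w = mul \<eta> u"
  define K where "K = \<bar>C\<bar> * Re (ip (mul \<eta> u) u)"
  have K0: "K \<ge> 0" unfolding K_def using wpos_Re[OF wp u] by simp
  have bv: "Re (ip (mul \<eta> v) v) \<le> \<bar>C\<bar> * (norm v)\<^sup>2" if v: "v \<in> A0" for v
  proof -
    have "Re (ip (mul \<eta> v) v) \<le> cmod (ip (mul \<eta> v) v)" by (rule complex_Re_le_cmod)
    also have "\<dots> \<le> norm (mul \<eta> v) * norm v" by (rule cauchy_schwarz)
    also have "\<dots> \<le> (C * norm v) * norm v" using bd[OF v] by (simp add: mult_right_mono)
    also have "\<dots> \<le> \<bar>C\<bar> * (norm v)\<^sup>2"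
      using mult_right_mono[OF abs_ge_self[of C], of "norm v * norm v"] by (simp add: power2_eq_square mult.assoc)
    finally show ?thesis .
  qed
  have all: "(cmod (ip w v))\<^sup>2 \<le> K * (norm v)\<^sup>2" for v
  proof (rule dens_le[where f="\<lambda>v. (cmod (ip w v))\<^sup>2" and g="\<lambda>v. K * (norm v)\<^sup>2"])
    show "continuous_on UNIV (\<lambda>v. (cmod (ip w v))\<^sup>2)"
      by (intro continuous_intros cont_ip2 cid)
    show "continuous_on UNIV (\<lambda>v. K * (norm v)\<^sup>2)" by (intro continuous_intros)
    fix x assume x: "x \<in> A0"
    have "(cmod (ip w x))\<^sup>2 \<le> Re (ip (mul \<eta> u) u) * Re (ip (mul \<eta> x) x)"
      unfolding w_def by (rule CSB[OF wp u x])
    also have "\<dots> \<le> Re (ip (mul \<eta> u) u) * (\<bar>C\<bar> * (norm x)\<^sup>2)"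
      using bv[OF x] wpos_Re[OF wp u] by (rule mult_left_mono)
    finally show "(cmod (ip w x))\<^sup>2 \<le> K * (norm x)\<^sup>2" by (simp add: K_def mult_ac)
  qed
  have "cmod (ip w w) = (norm w)\<^sup>2" by (simp add: ip_self norm_power)
  then have "((norm w)\<^sup>2)\<^sup>2 \<le> K * (norm w)\<^sup>2" using all[of w] by simp
  then have "(norm w)\<^sup>2 \<le> K"
    by (cases "norm w = 0") (auto simp: K0 power2_eq_square)
  then show ?thesis by (simp add: w_def K_def)
qed

end



context hqa begin

lemma cnj_nonneg: "(0::complex) \<le> z \<Longrightarrow> 0 \<le> cnj z"
  by (simp add: less_eq_complex_def)

lemma rev:
  assumes wp: "w_positive ip A0 mul \<eta>" and bd: "bounded_elem A0 mul \<eta>"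
    and lin: "complex_linear cs (*) \<omega>" and rep: "\<And>\<xi>. \<omega> \<xi> = ip \<xi> \<eta>"
  shows "\<omega> \<in> Rc cs A0 mul star"
proof -
  obtain C where C: "\<And>x. x \<in> A0 \<Longrightarrow> norm (mul \<eta> x) \<le> C * norm x" using bd unfolding bounded_elem_def by blast
  have sa: "star \<eta> = \<eta>" by (rule selfadj[OF wp])
  have om: "\<omega> = (\<lambda>\<xi>. ip \<xi> \<eta>)" using rep by blast
  have cont: "continuous_on UNIV \<omega>" unfolding om by (intro cont_ip1 cid)
  have L1e: "\<omega> (mul (star x) x) = cnj (ip (mul \<eta> (star x)) (star x))" if x: "x \<in> A0" for x
  proof -
    have "\<omega> (mul (star x) x) = ip (star x) (mul \<eta> (star x))" using E2[OF x] rep by simp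
    then show ?thesis by (subst (asm) ip_sym)
  qed
  have L1: "0 \<le> \<omega> (mul (star x) x)" if x: "x \<in> A0" for x
    unfolding L1e[OF x] by (rule cnj_nonneg) (use wp star_mem[OF x] in \<open>simp add: w_positive_def\<close>)
  have L2: "\<omega> (mul (mul (star y) (star \<xi>)) x) = cnj (\<omega> (mul (mul (star x) \<xi>) y))"
    if x: "x \<in> A0" and y: "y \<in> A0" for x y \<xi>
  proof -
    have sx: "star x \<in> A0" and sy: "star y \<in> A0" using x y by (auto intro: star_mem)
    have "\<omega> (mul (mul (star y) (star \<xi>)) x) = ip (mul (star y) (star \<xi>)) (mul \<eta> (star x))"
      using rep E2[OF x] by simp
    also have "\<dots> = ip (star \<xi>) (mul y (mul \<eta> (star x)))" using E3[OF sy] by simp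
    finally have lhs: "\<omega> (mul (mul (star y) (star \<xi>)) x) = ip (star \<xi>) (mul y (mul \<eta> (star x)))" .
    have "cnj (\<omega> (mul (mul (star x) \<xi>) y)) = ip \<eta> (mul (mul (star x) \<xi>) y)"
      using rep by (simp add: ip_sym[of \<eta>])
    also have "\<dots> = ip (star (mul (mul (star x) \<xi>) y)) (star \<eta>)" by (rule E4)
    also have "star (mul (mul (star x) \<xi>) y) = mul (star y) (star (mul (star x) \<xi>))" by (rule E5b[OF y])
    also have "star (mul (star x) \<xi>) = mul (star \<xi>) x" using E5a[OF sx] by simp
    also have "ip (mul (star y) (mul (star \<xi>) x)) (star \<eta>) = ip (mul (star \<xi>) x) (mul y \<eta>)"
      using E3[OF sy] sa by simp
    also have "\<dots> = ip (star \<xi>) (mul (mul y \<eta>) (star x))" by (rule E2[OF x])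
    also have "mul (mul y \<eta>) (star x) = mul y (mul \<eta> (star x))" by (rule E6[OF y sx])
    finally show ?thesis using lhs by simp
  qed
  have L3: "\<exists>\<gamma>>0. \<forall>x\<in>A0. cmod (\<omega> (mul (star \<xi>) x)) \<le> \<gamma> * sqrt (Re (\<omega> (mul (star x) x)))" for \<xi>
  proof (intro exI conjI ballI)
    define \<gamma> where "\<gamma> = norm \<xi> * sqrt \<bar>C\<bar> + 1"
    show "\<gamma> > 0" unfolding \<gamma>_def by (simp add: add_nonneg_pos)
    fix x assume x: "x \<in> A0"
    define u where "u = star x"
    have u: "u \<in> A0" unfolding u_def using x by (rule star_mem)
    have R0: "0 \<le> Re (ip (mul \<eta> u) u)" by (rule wpos_Re[OF wp u])
    have re: "Re (\<omega> (mul (star x) x)) = Re (ip (mul \<eta> u) u)" unfolding L1e[OF x] u_def by simp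
    have "cmod (\<omega> (mul (star \<xi>) x)) = cmod (ip (star \<xi>) (mul \<eta> u))" using rep E2[OF x] by (simp add: u_def)
    also have "\<dots> \<le> norm (star \<xi>) * norm (mul \<eta> u)" by (rule cauchy_schwarz)
    also have "norm (mul \<eta> u) \<le> sqrt \<bar>C\<bar> * sqrt (Re (ip (mul \<eta> u) u))"
    proof -
      have "(norm (mul \<eta> u))\<^sup>2 \<le> \<bar>C\<bar> * Re (ip (mul \<eta> u) u)" by (rule Kbound[OF wp C u])
      then have "sqrt ((norm (mul \<eta> u))\<^sup>2) \<le> sqrt (\<bar>C\<bar> * Re (ip (mul \<eta> u) u))" by (rule real_sqrt_le_mono)
      then show ?thesis by (simp add: real_sqrt_mult)
    qed
    then have "norm (star \<xi>) * norm (mul \<eta> u) \<le> norm \<xi> * (sqrt \<bar>C\<bar> * sqrt (Re (ip (mul \<eta> u) u)))"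
      by (simp add: norm_star mult_left_mono)
    also have "\<dots> \<le> \<gamma> * sqrt (Re (ip (mul \<eta> u) u))"
      unfolding \<gamma>_def using R0 by (simp add: algebra_simps)
    finally show "cmod (\<omega> (mul (star \<xi>) x)) \<le> \<gamma> * sqrt (Re (\<omega> (mul (star x) x)))" using re by simp
  qed
  have R: "representable A0 mul star \<omega>" unfolding representable_def
    by (intro conjI ballI allI L1 L2 L3; assumption)
  show ?thesis
    unfolding Rc_def using lin cont R by blast
qed

end



context hqa begin

lemma fwd:
  assumes "\<omega> \<in> Rc cs A0 mul star"
  shows "\<exists>\<eta>. w_positive ip A0 mul \<eta> \<and> bounded_elem A0 mul \<eta> \<and> (\<forall>\<xi>. \<omega> \<xi> = ip \<xi> \<eta>)"
proof -
  have lin: "complex_linear cs (*) \<omega>" and R: "representable A0 mul star \<omega>" and cont: "continuous_on UNIV \<omega>"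
    using assms unfolding Rc_def by auto
  have L1: "\<And>x. x \<in> A0 \<Longrightarrow> 0 \<le> \<omega> (mul (star x) x)" using R unfolding representable_def by blast
  have L3: "\<And>\<xi>. \<exists>\<gamma>>0. \<forall>x\<in>A0. cmod (\<omega> (mul (star \<xi>) x)) \<le> \<gamma> * sqrt (Re (\<omega> (mul (star x) x)))"
    using R unfolding representable_def by blast
  obtain \<eta> where rep: "\<And>\<xi>. \<omega> \<xi> = ip \<xi> \<eta>" using riesz[OF lin cont] by blast
  have Bform: "ip (mul \<eta> u) u = cnj (\<omega> (mul (star (star u)) (star u)))" if u: "u \<in> A0" for u
  proof -
    have "\<omega> (mul u (star u)) = ip u (mul \<eta> u)" using rep E2[OF star_mem[OF u]] by simp
    then show ?thesis by (simp add: ip_sym[of u])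
  qed
  have wp: "w_positive ip A0 mul \<eta>"
    unfolding w_positive_def
  proof
    fix u assume u: "u \<in> A0"
    have "0 \<le> \<omega> (mul (star (star u)) (star u))" by (rule L1[OF star_mem[OF u]])
    then show "0 \<le> ip (mul \<eta> u) u" unfolding Bform[OF u] by (simp add: less_eq_complex_def)
  qed
  have gb: "\<exists>\<gamma>>0. \<forall>u\<in>A0. cmod (ip \<zeta> (mul \<eta> u)) \<le> \<gamma> * sqrt (Re (ip (mul \<eta> u) u))" for \<zeta>
  proof -
    obtain \<gamma> where g: "\<gamma> > 0" "\<And>x. x \<in> A0 \<Longrightarrow> cmod (\<omega> (mul (star (star \<zeta>)) x)) \<le> \<gamma> * sqrt (Re (\<omega> (mul (star x) x)))"
      using L3[of "star \<zeta>"] by blast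
    show ?thesis
    proof (intro exI conjI ballI)
      show "\<gamma> > 0" by (rule g(1))
      fix u assume u: "u \<in> A0"
      have "cmod (ip \<zeta> (mul \<eta> u)) = cmod (\<omega> (mul (star (star \<zeta>)) (star u)))"
        using rep E2[OF star_mem[OF u], of \<zeta> \<eta>] by simp
      also have "\<dots> \<le> \<gamma> * sqrt (Re (\<omega> (mul (star (star u)) (star u))))" by (rule g(2)[OF star_mem[OF u]])
      also have "Re (\<omega> (mul (star (star u)) (star u))) = Re (ip (mul \<eta> u) u)" unfolding Bform[OF u] by simp
      finally show "cmod (ip \<zeta> (mul \<eta> u)) \<le> \<gamma> * sqrt (Re (ip (mul \<eta> u) u))" .
    qed
  qed
  define I where "I = {u\<in>A0. norm u \<le> 1}"
  define g where "g u \<zeta> = cmod (ip \<zeta> (mul \<eta> u)) * inverse (sqrt (norm (mul \<eta> u)))" for u \<zeta>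
  have gcont: "continuous_on UNIV (g u)" for u
    unfolding g_def by (intro continuous_on_mult_right continuous_on_norm cont_ip1 cid)
  have pb: "\<exists>\<gamma>. \<forall>u\<in>I. \<bar>g u \<zeta>\<bar> \<le> \<gamma>" for \<zeta>
  proof -
    obtain \<gamma> where g0: "\<gamma> > 0" and gg: "\<And>u. u \<in> A0 \<Longrightarrow> cmod (ip \<zeta> (mul \<eta> u)) \<le> \<gamma> * sqrt (Re (ip (mul \<eta> u) u))"
      using gb[of \<zeta>] by blast
    have "\<bar>g u \<zeta>\<bar> \<le> \<gamma>" if uI: "u \<in> I" for u
    proof -
      have u: "u \<in> A0" and u1: "norm u \<le> 1" using uI by (auto simp: I_def)
      define nw where "nw = norm (mul \<eta> u)"
      show ?thesis
      proof (cases "nw = 0")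
        case True then show ?thesis using g0 by (simp add: g_def nw_def)
      next
        case False
        then have nw0: "nw > 0" by (simp add: nw_def)
        have "Re (ip (mul \<eta> u) u) \<le> cmod (ip (mul \<eta> u) u)" by (rule complex_Re_le_cmod)
        also have "\<dots> \<le> nw * norm u" unfolding nw_def by (rule cauchy_schwarz)
        also have "\<dots> \<le> nw" using u1 nw0 by (simp add: mult_left_le)
        finally have "sqrt (Re (ip (mul \<eta> u) u)) \<le> sqrt nw" by (rule real_sqrt_le_mono)
        then have "cmod (ip \<zeta> (mul \<eta> u)) \<le> \<gamma> * sqrt nw"
          using gg[OF u] g0 by (meson mult_left_mono less_imp_le order_trans)
        then have "cmod (ip \<zeta> (mul \<eta> u)) * inverse (sqrt nw) \<le> \<gamma>"
          using nw0 by (simp add: field_simps)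
        then show ?thesis using nw0 by (simp add: g_def nw_def[symmetric])
      qed
    qed
    then show ?thesis by blast
  qed
  obtain z r n where r: "r > 0" and zr: "\<And>\<zeta> u. \<zeta> \<in> ball z r \<Longrightarrow> u \<in> I \<Longrightarrow> \<bar>g u \<zeta>\<bar> \<le> real n"
    using baire_ubp[of I g, OF gcont pb] by blast
  define M where "M = (4 * real n / r)\<^sup>2"
  have MI: "norm (mul \<eta> u) \<le> M" if uI: "u \<in> I" for u
  proof -
    define w where "w = mul \<eta> u"
    define nw where "nw = norm w"
    show ?thesis
    proof (cases "nw = 0")
      case True then show ?thesis by (simp add: M_def nw_def w_def)
    next
      case False
      then have nw0: "nw > 0" by (simp add: nw_def)
      have sq: "sqrt nw > 0" using nw0 by simp
      define s where "s = r / 2 / nw"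
      define \<zeta> where "\<zeta> = z + s *\<^sub>R w"
      have "dist z \<zeta> = s * nw" using r nw0 by (simp add: \<zeta>_def dist_norm s_def nw_def)
      also have "\<dots> = r / 2" using nw0 by (simp add: s_def)
      finally have "\<zeta> \<in> ball z r" using r by simp
      moreover have "z \<in> ball z r" using r by simp
      ultimately have b1: "\<bar>g u \<zeta>\<bar> \<le> real n" and b2: "\<bar>g u z\<bar> \<le> real n" using zr uI by auto
      have c1: "cmod (ip \<zeta> w) \<le> real n * sqrt nw"
      proof -
        have "cmod (ip \<zeta> w) * inverse (sqrt nw) \<le> real n" using b1 by (simp add: g_def w_def[symmetric] nw_def[symmetric])
        then show ?thesis using sq by (simp add: field_simps)
      qed
      have c2: "cmod (ip z w) \<le> real n * sqrt nw"
      proof -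
        have "cmod (ip z w) * inverse (sqrt nw) \<le> real n" using b2 by (simp add: g_def w_def[symmetric] nw_def[symmetric])
        then show ?thesis using sq by (simp add: field_simps)
      qed
      have "ip \<zeta> w - ip z w = complex_of_real (s * nw\<^sup>2)"
        by (simp add: \<zeta>_def ip_add1 ip_scaleR1 ip_self nw_def)
      moreover have "s * nw\<^sup>2 \<ge> 0" using nw0 r by (simp add: s_def)
      ultimately have "s * nw\<^sup>2 = cmod (ip \<zeta> w - ip z w)" by (simp only: norm_of_real abs_of_nonneg)
      also have "\<dots> \<le> cmod (ip \<zeta> w) + cmod (ip z w)" by (rule norm_triangle_ineq4)
      finally have "s * nw\<^sup>2 \<le> 2 * real n * sqrt nw" using c1 c2 by simp
      moreover have "s * nw\<^sup>2 = (r / 2 * sqrt nw) * sqrt nw"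
        using nw0 by (simp add: s_def power2_eq_square)
      ultimately have "(r / 2 * sqrt nw) * sqrt nw \<le> (2 * real n) * sqrt nw" by simp
      then have "r / 2 * sqrt nw \<le> 2 * real n" using sq by simp
      then have "sqrt nw \<le> 4 * real n / r" using r by (simp add: field_simps)
      then have "(sqrt nw)\<^sup>2 \<le> (4 * real n / r)\<^sup>2" using sq by (intro power_mono) auto
      then show ?thesis using nw0 by (simp add: M_def nw_def w_def)
    qed
  qed
  have bd: "bounded_elem A0 mul \<eta>"
    unfolding bounded_elem_def
  proof (intro exI ballI)
    fix x assume x: "x \<in> A0"
    show "norm (mul \<eta> x) \<le> M * norm x"
    proof (cases "x = 0")
      case True then show ?thesis by (simp add: M1zero)
    next
      case False
      then have nx: "norm x > 0" by simp
      define u where "u = (1 / norm x) *\<^sub>R x"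
      have "u \<in> I" using nx by (simp add: I_def u_def A0_scaleR[OF x])
      then have "norm (mul \<eta> u) \<le> M" by (rule MI)
      moreover have "mul \<eta> u = (1 / norm x) *\<^sub>R mul \<eta> x" unfolding u_def by (rule M1sR[OF x])
      ultimately have "norm (mul \<eta> x) / norm x \<le> M" by simp
      then show ?thesis using nx by (simp add: field_simps)
    qed
  qed
  show ?thesis using wp bd rep by blast
qed

end


theorem mainTheorem11:
  fixes cs :: "complex \<Rightarrow> 'a::{real_normed_vector,complete_space} \<Rightarrow> 'a"
    and ip :: "'a \<Rightarrow> 'a \<Rightarrow> complex" and A0 :: "'a set"
    and mul :: "'a \<Rightarrow> 'a \<Rightarrow> 'a" and star :: "'a \<Rightarrow> 'a"
    and \<omega> :: "'a \<Rightarrow> complex"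
  assumes "hilbert_quasi_star_algebra cs ip A0 mul star"
    and "complex_linear cs (*) \<omega>"
  shows "\<omega> \<in> Rc cs A0 mul star \<longleftrightarrow>
         (\<exists>!\<eta>. w_positive ip A0 mul \<eta> \<and> bounded_elem A0 mul \<eta> \<and> (\<forall>\<xi>. \<omega> \<xi> = ip \<xi> \<eta>))"
proof -
  interpret hqa cs ip A0 mul star by unfold_locales (rule assms(1))
  show ?thesis
  proof
    assume "\<omega> \<in> Rc cs A0 mul star"
    then obtain \<eta> where h: "w_positive ip A0 mul \<eta> \<and> bounded_elem A0 mul \<eta> \<and> (\<forall>\<xi>. \<omega> \<xi> = ip \<xi> \<eta>)"
      using fwd by blast
    show "\<exists>!\<eta>. w_positive ip A0 mul \<eta> \<and> bounded_elem A0 mul \<eta> \<and> (\<forall>\<xi>. \<omega> \<xi> = ip \<xi> \<eta>)"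
    proof (rule ex1I[of _ \<eta>])
      show "w_positive ip A0 mul \<eta> \<and> bounded_elem A0 mul \<eta> \<and> (\<forall>\<xi>. \<omega> \<xi> = ip \<xi> \<eta>)" by (rule h)
      fix \<eta>' assume h': "w_positive ip A0 mul \<eta>' \<and> bounded_elem A0 mul \<eta>' \<and> (\<forall>\<xi>. \<omega> \<xi> = ip \<xi> \<eta>')"
      show "\<eta>' = \<eta>" by (rule ip_ext_eq) (use h h' in metis)
    qed
  next
    assume "\<exists>!\<eta>. w_positive ip A0 mul \<eta> \<and> bounded_elem A0 mul \<eta> \<and> (\<forall>\<xi>. \<omega> \<xi> = ip \<xi> \<eta>)"
    then obtain \<eta> where h: "w_positive ip A0 mul \<eta>" "bounded_elem A0 mul \<eta>" "\<forall>\<xi>. \<omega> \<xi> = ip \<xi> \<eta>"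
      by blast
    show "\<omega> \<in> Rc cs A0 mul star" by (rule rev[OF h(1) h(2) assms(2)]) (use h(3) in blast)
  qed
qed

end
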